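(* Let $0\le k\le n$. Consider $n$ men and $n$ women, and fix a set $G$ of $k$ men and $k$ women. Let $S(k,n)$ be the number of ways to choose the preference rankings of the $n-k$ men and $n-k$ women not in $G$ (each such person strictly ranking all $n$ people of the opposite gender) so that there is no pair of soulmates consisting of a man not in $G$ and a woman not in $G$. Then \[S(k,n) = \sum_{i=0}^{n-k} (-1)^{i}\binom{n-k}{i}^2 (n-1)!^{2i}\, i!\, n!^{2n-2k-2i}.\]
   Context: Each man strictly ranks the $n$ women by a bijection to $\{1,\dots,n\}$ (1 = favorite), and each woman strictly ranks the $n$ men likewise. A man and a woman are soulmates if each ranks the other first. *)

theory Defs
  imports Main "HOL-Library.FuncSet"
begin

text \<open>A ranking is a bijection from
the n people of the opposite gender onto {1..n} (1 = favourite); it is made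
extensional (value 0 outside {..<n}) so that distinct rankings are distinct functions.\<close>
definition rankings :: "nat \<Rightarrow> (nat \<Rightarrow> nat) set" where
  "rankings n = {r. bij_betw r {..<n} {1..n} \<and> (\<forall>x. n \<le> x \<longrightarrow> r x = 0)}"

definition soulmates :: "(nat \<Rightarrow> nat \<Rightarrow> nat) \<Rightarrow> (nat \<Rightarrow> nat \<Rightarrow> nat) \<Rightarrow> nat \<Rightarrow> nat \<Rightarrow> bool" where
  "soulmates P Q m w \<longleftrightarrow> P m w = 1 \<and> Q w m = 1"

definition S_count :: "nat \<Rightarrow> nat set \<Rightarrow> nat set \<Rightarrow> nat" where
  "S_count n GM GW = card {(P, Q).
      P \<in> ({..<n} - GM) \<rightarrow>\<^sub>E rankings n \<and>
      Q \<in> ({..<n} - GW) \<rightarrow>\<^sub>E rankings n \<and>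
      \<not> (\<exists>m \<in> {..<n} - GM. \<exists>w \<in> {..<n} - GW. soulmates P Q m w)}"

end

theory Submission
  imports Defs
begin
definition G :: "int \<Rightarrow> int \<Rightarrow> nat \<Rightarrow> nat \<Rightarrow> int" where
  "G x y a b = (\<Sum>i\<le>a. (-1)^i * int (a choose i) * int (b choose i) * int (fact i) * y^i * x^(a-i) * x^(b-i))"

lemma G0: "G x y 0 b = x ^ b"
  by (simp add: G_def)

lemma choose_aux: "int (b choose Suc i) * int (fact (Suc i)) = int b * int ((b - 1) choose i) * int (fact i)"
proof (cases b)
  case 0 then show ?thesis by simp
next
  case (Suc c)
  have "Suc i * (Suc c choose Suc i) = Suc c * (c choose i)"
    by (rule Suc_times_binomial)
  then have "int (Suc i) * int (Suc c choose Suc i) = int (Suc c) * int (c choose i)"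
    by (metis of_nat_mult)
  note h = this
  have f0: "fact (Suc i) = Suc i * (fact i :: nat)" by simp
  have f: "int (fact (Suc i)) = int (Suc i) * int (fact i)" by (metis f0 of_nat_mult)
  have "int (Suc c choose Suc i) * int (fact (Suc i)) = (int (Suc i) * int (Suc c choose Suc i)) * int (fact i)"
    by (simp only: f mult_ac)
  also have "\<dots> = int (Suc c) * int (c choose i) * int (fact i)" by (simp only: h)
  finally show ?thesis using Suc by simp
qed

lemma GSuc: "G x y (Suc a) b = x * G x y a b - int b * y * G x y a (b - 1)"
proof -
  define t where "t i = (-1::int)^i * int (b choose i) * int (fact i) * y^i * x^(b-i)" for i
  have "G x y (Suc a) b = (\<Sum>i\<le>Suc a. int (Suc a choose i) * x^(Suc a - i) * t i)"
    unfolding G_def t_def by (rule sum.cong) (auto simp: algebra_simps)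
  also have "\<dots> = x^(Suc a) * t 0 + (\<Sum>i\<le>a. int (Suc a choose Suc i) * x^(a - i) * t (Suc i))"
    by (subst sum.atMost_Suc_shift) simp
  also have "\<dots> = x^(Suc a) * t 0 + (\<Sum>i\<le>a. int (a choose Suc i) * x^(a - i) * t (Suc i))
      + (\<Sum>i\<le>a. int (a choose i) * x^(a - i) * t (Suc i))"
    by (simp add: sum.distrib algebra_simps)
  also have "x^(Suc a) * t 0 + (\<Sum>i\<le>a. int (a choose Suc i) * x^(a - i) * t (Suc i))
      = (\<Sum>i\<le>Suc a. int (a choose i) * x^(Suc a - i) * t i)"
    by (subst sum.atMost_Suc_shift) simp
  also have "\<dots> = (\<Sum>i\<le>a. int (a choose i) * x^(Suc a - i) * t i)"
    by simp
  also have "\<dots> = x * G x y a b"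
    unfolding G_def t_def sum_distrib_left
    by (rule sum.cong) (auto simp: algebra_simps Suc_diff_le)
  also have "(\<Sum>i\<le>a. int (a choose i) * x^(a - i) * t (Suc i)) = - (int b * y * G x y a (b - 1))"
    unfolding G_def t_def sum_distrib_left sum_negf[symmetric]
  proof (rule sum.cong)
    fix i assume "i \<in> {..a}"
    have e: "x ^ (b - Suc i) = x ^ (b - 1 - i)" by (simp add: diff_diff_add)
    have "int (b choose Suc i) * int (fact (Suc i)) = int b * int ((b - 1) choose i) * int (fact i)"
      by (rule choose_aux)
    note ce = this
    have "int (a choose i) * x ^ (a - i) * ((- 1) ^ Suc i * int (b choose Suc i) * int (fact (Suc i)) * y ^ Suc i * x ^ (b - Suc i))
       = int (a choose i) * x ^ (a - i) * (- 1) ^ Suc i * y ^ Suc i * x ^ (b - 1 - i) * (int (b choose Suc i) * int (fact (Suc i)))"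
      unfolding e by (simp only: mult_ac)
    also have "\<dots> = int (a choose i) * x ^ (a - i) * (- 1) ^ Suc i * y ^ Suc i * x ^ (b - 1 - i) * (int b * int ((b - 1) choose i) * int (fact i))"
      by (simp only: ce)
    also have "\<dots> = - (int b * y * ((- 1) ^ i * int (a choose i) * int (b - 1 choose i) * int (fact i) * y ^ i * x ^ (a - i) * x ^ (b - 1 - i)))"
      by (simp add: mult_ac power_Suc)
    finally show "int (a choose i) * x ^ (a - i) * ((- 1) ^ Suc i * int (b choose Suc i) * int (fact (Suc i)) * y ^ Suc i * x ^ (b - Suc i)) =
         - (int b * y * ((- 1) ^ i * int (a choose i) * int (b - 1 choose i) * int (fact i) * y ^ i * x ^ (a - i) * x ^ (b - 1 - i)))" .
  qed simp
  finally show ?thesis by simp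
qed
definition BF :: "'a set \<Rightarrow> 'b set \<Rightarrow> 'b \<Rightarrow> ('a \<Rightarrow> 'b) set" where
  "BF A B c = {f. bij_betw f A B \<and> (\<forall>x. x \<notin> A \<longrightarrow> f x = c)}"

lemma BF_insert:
  assumes "a \<notin> A"
  shows "BF (insert a A) B c = (\<Union>b\<in>B. (\<lambda>g. g(a := b)) ` BF A (B - {b}) c)"
proof (rule set_eqI, rule iffI)
  fix f assume f: "f \<in> BF (insert a A) B c"
  let ?b = "f a" let ?g = "f(a := c)"
  have bb: "?b \<in> B" using f by (auto simp: BF_def bij_betw_def)
  have "bij_betw f A (B - {?b})"
    using f assms unfolding BF_def bij_betw_def inj_on_def by auto
  then have "bij_betw ?g A (B - {?b})"
    by (rule bij_betw_cong[THEN iffD1, rotated]) (use assms in auto)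
  then have "?g \<in> BF A (B - {?b}) c" using f by (auto simp: BF_def)
  moreover have "f = ?g(a := ?b)" by simp
  ultimately show "f \<in> (\<Union>b\<in>B. (\<lambda>g. g(a := b)) ` BF A (B - {b}) c)" using bb by blast
next
  fix f assume "f \<in> (\<Union>b\<in>B. (\<lambda>g. g(a := b)) ` BF A (B - {b}) c)"
  then obtain b g where b: "b \<in> B" and g: "g \<in> BF A (B - {b}) c" and fg: "f = g(a := b)" by blast
  have "bij_betw f A (B - {b})"
    using g assms fg by (auto simp: BF_def intro: bij_betw_cong[THEN iffD1, rotated])
  then have "bij_betw f (insert a A) B"
    using b fg assms unfolding bij_betw_def inj_on_def by auto
  then show "f \<in> BF (insert a A) B c" using g fg by (auto simp: BF_def)
qed

lemma card_BF: "finite A \<Longrightarrow> finite B \<Longrightarrow> card A = card B \<Longrightarrow> card (BF A B c) = fact (card A)"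
proof (induction A arbitrary: B rule: finite_induct)
  case empty
  then have "B = {}" by simp
  then have "BF ({}::'a set) B c = {\<lambda>_. c}" by (auto simp: BF_def bij_betw_def)
  then have "card (BF ({}::'a set) B c) = card {\<lambda>_::'a. c}" by (rule arg_cong)
  also have "\<dots> = 1" by simp
  finally show ?case by simp
next
  case (insert a A)
  have fin: "finite (BF A (B - {b}) c)" if "b \<in> B" for b
  proof -
    have "card (BF A (B - {b}) c) = fact (card A)"
      using insert that by (intro insert.IH) auto
    then show ?thesis by (metis card.infinite fact_nonzero)
  qed
  have inj: "inj_on (\<lambda>g. g(a := b)) (BF A (B - {b}) c)" for b
  proof (rule inj_onI)
    fix g h assume "g \<in> BF A (B - {b}) c" "h \<in> BF A (B - {b}) c" "g(a := b) = h(a := b)"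
    note gh = this
    have "g a = c" "h a = c" using gh(1,2) insert(2) unfolding BF_def by auto
    show "g = h"
    proof
      fix x show "g x = h x"
        using fun_cong[OF gh(3), of x] \<open>g a = c\<close> \<open>h a = c\<close> by (cases "x = a") auto
    qed
  qed
  have "card (BF (insert a A) B c) = (\<Sum>b\<in>B. card ((\<lambda>g. g(a := b)) ` BF A (B - {b}) c))"
    unfolding BF_insert[OF insert(2)]
  proof (rule card_UN_disjoint)
    show "finite B" by fact
    show "\<forall>i\<in>B. finite ((\<lambda>g. g(a := i)) ` BF A (B - {i}) c)" using fin by blast
    show "\<forall>i\<in>B. \<forall>j\<in>B. i \<noteq> j \<longrightarrow> (\<lambda>g. g(a := i)) ` BF A (B - {i}) c \<inter> (\<lambda>g. g(a := j)) ` BF A (B - {j}) c = {}"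
    proof (intro ballI impI)
      fix i j :: 'b assume "i \<noteq> j"
      show "(\<lambda>g. g(a := i)) ` BF A (B - {i}) c \<inter> (\<lambda>g. g(a := j)) ` BF A (B - {j}) c = {}"
      proof (rule equals0I)
        fix f assume "f \<in> (\<lambda>g. g(a := i)) ` BF A (B - {i}) c \<inter> (\<lambda>g. g(a := j)) ` BF A (B - {j}) c"
        note fi = this
        from fi obtain g1 where "f = g1(a := i)" by blast
        then have "f a = i" by simp
        from fi obtain g2 where "f = g2(a := j)" by blast
        then have "f a = j" by simp
        show False using \<open>i \<noteq> j\<close> \<open>f a = i\<close> \<open>f a = j\<close> by simp
      qed
    qed
  qed
  also have "\<dots> = (\<Sum>b\<in>B. fact (card A))"
  proof (rule sum.cong)
    fix b assume "b \<in> B"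
    then show "card ((\<lambda>g. g(a := b)) ` BF A (B - {b}) c) = fact (card A)"
    proof -
      have "card (B - {b}) = card A" using insert \<open>b \<in> B\<close> by simp
      then have "card (BF A (B - {b}) c) = fact (card A)"
        using insert by (intro insert.IH) auto
      then show ?thesis using inj by (simp add: card_image)
    qed
  qed simp
  also have "\<dots> = fact (card (insert a A))"
    using insert by (metis card_insert_disjoint fact_Suc sum_constant)
  finally show ?case .
qed
lemma rankings_BF: "rankings n = BF {..<n} {1..n} 0"
  by (auto simp: rankings_def BF_def not_less)

lemma card_rankings: "card (rankings n) = fact n"
  by (simp add: rankings_BF card_BF)

lemma finite_rankings: "finite (rankings n)"
  by (metis card.infinite card_rankings fact_nonzero)

lemma rank_inj: "r \<in> rankings n \<Longrightarrow> a < n \<Longrightarrow> b < n \<Longrightarrow> r a = r b \<Longrightarrow> a = b"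
  by (auto simp: rankings_def bij_betw_def inj_on_def)

lemma card_rank1:
  assumes w: "w < n"
  shows "card {r \<in> rankings n. r w = 1} = fact (n - 1)"
proof -
  let ?A = "{..<n} - {w}" and ?B = "{1..n} - {1::nat}"
  have eq: "{r \<in> rankings n. r w = 1} = (\<lambda>f. f(w := 1)) ` BF ?A ?B 0"
  proof (rule set_eqI, rule iffI)
    fix r assume r: "r \<in> {r \<in> rankings n. r w = 1}"
    let ?f = "r(w := 0)"
    have br: "bij_betw r {..<n} {1..n}" using r by (auto simp: rankings_def)
    have "bij_betw r {w} {1}" using r by (auto simp: bij_betw_def)
    then have "bij_betw r ?A ?B" using br w by (intro bij_betw_DiffI) auto
    then have "bij_betw ?f ?A ?B" by (rule bij_betw_cong[THEN iffD1, rotated]) auto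
    moreover have "\<forall>x. x \<notin> ?A \<longrightarrow> ?f x = 0" using r by (auto simp: rankings_def)
    ultimately have "?f \<in> BF ?A ?B 0" by (simp add: BF_def)
    moreover have "r = ?f(w := 1)" using r by auto
    ultimately show "r \<in> (\<lambda>f. f(w := 1)) ` BF ?A ?B 0" by blast
  next
    fix r assume "r \<in> (\<lambda>f. f(w := 1)) ` BF ?A ?B 0"
    then obtain f where f: "f \<in> BF ?A ?B 0" and rf: "r = f(w := 1)" by blast
    have "bij_betw f ?A ?B" using f by (simp add: BF_def)
    then have b1: "bij_betw r ?A ?B" unfolding rf by (rule bij_betw_cong[THEN iffD1, rotated]) auto
    have "bij_betw r (?A \<union> {w}) (?B \<union> {r w})"
      using b1 notIn_Un_bij_betw3[of w ?A r ?B] rf by auto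
    moreover have "?A \<union> {w} = {..<n}" using w by auto
    moreover have "?B \<union> {r w} = {1..n}" using w rf by auto
    ultimately have "bij_betw r {..<n} {1..n}" by simp
    moreover have "\<forall>x. n \<le> x \<longrightarrow> r x = 0" using f w rf by (auto simp: BF_def)
    ultimately show "r \<in> {r \<in> rankings n. r w = 1}" using rf by (simp add: rankings_def)
  qed
  have inj: "inj_on (\<lambda>f. f(w := 1)) (BF ?A ?B 0)"
  proof (rule inj_onI)
    fix f g assume fg: "f \<in> BF ?A ?B 0" "g \<in> BF ?A ?B 0" "f(w := 1) = g(w := 1)"
    have "f w = 0" "g w = 0" using fg by (auto simp: BF_def)
    show "f = g"
    proof
      fix x show "f x = g x"
        using fun_cong[OF fg(3), of x] \<open>f w = 0\<close> \<open>g w = 0\<close> by (cases "x = w") auto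
    qed
  qed
  have "card ?A = n - 1" using w by simp
  moreover have "card ?B = n - 1" using w by simp
  ultimately have "card (BF ?A ?B 0) = fact (n - 1)" by (simp add: card_BF)
  then show ?thesis unfolding eq using inj by (simp add: card_image)
qed
definition good :: "nat \<Rightarrow> nat set \<Rightarrow> nat set \<Rightarrow> ((nat \<Rightarrow> nat \<Rightarrow> nat) \<times> (nat \<Rightarrow> nat \<Rightarrow> nat)) set" where
  "good n M W = {(P, Q). P \<in> M \<rightarrow>\<^sub>E rankings n \<and> Q \<in> W \<rightarrow>\<^sub>E rankings n \<and>
      \<not> (\<exists>m \<in> M. \<exists>w \<in> W. soulmates P Q m w)}"

lemma finite_good: "finite M \<Longrightarrow> finite W \<Longrightarrow> finite (good n M W)"
proof -
  assume "finite M" "finite W"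
  then have "finite ((M \<rightarrow>\<^sub>E rankings n) \<times> (W \<rightarrow>\<^sub>E rankings n))"
    by (simp add: finite_PiE finite_rankings)
  moreover have "good n M W \<subseteq> (M \<rightarrow>\<^sub>E rankings n) \<times> (W \<rightarrow>\<^sub>E rankings n)"
    by (auto simp: good_def)
  ultimately show ?thesis by (rule finite_subset[rotated])
qed

lemma upd_inj:
  assumes "P \<in> M \<rightarrow>\<^sub>E B" "P' \<in> M \<rightarrow>\<^sub>E B" "m \<notin> M" "P(m := r) = P'(m := r')"
  shows "P = P' \<and> r = r'"
proof
  have "P m = undefined" "P' m = undefined" using assms by (auto simp: PiE_def extensional_def)
  show "P = P'"
  proof
    fix x show "P x = P' x"
      using fun_cong[OF assms(4), of x] \<open>P m = undefined\<close> \<open>P' m = undefined\<close> by (cases "x = m") auto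
  qed
  show "r = r'" using fun_cong[OF assms(4), of m] by simp
qed

lemma good_empty: "good n {} W = (\<lambda>Q. (\<lambda>_. undefined, Q)) ` (W \<rightarrow>\<^sub>E rankings n)"
  by (auto simp: good_def)

lemma main_count:
  assumes "finite M"
  shows "M \<subseteq> {..<n} \<Longrightarrow> finite W \<Longrightarrow> W \<subseteq> {..<n} \<Longrightarrow>
    int (card (good n M W)) = G (int (fact n)) (int (fact (n - 1)) ^ 2) (card M) (card W)"
  using assms
proof (induction M arbitrary: W rule: finite_induct)
  case empty
  have "card (good n {} W) = card (W \<rightarrow>\<^sub>E rankings n)"
    unfolding good_empty by (rule card_image) (auto intro: inj_onI)
  also have "\<dots> = fact n ^ card W"
    using empty by (simp add: card_PiE card_rankings)
  finally show ?case by (simp add: G0)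
next
  case (insert m0 M)
  define R where "R = rankings n"
  have m0: "m0 < n" and Msub: "M \<subseteq> {..<n}" using insert by auto
  define X where "X = {(P, Q). P \<in> insert m0 M \<rightarrow>\<^sub>E R \<and> Q \<in> W \<rightarrow>\<^sub>E R \<and>
      \<not> (\<exists>m \<in> M. \<exists>w \<in> W. soulmates P Q m w)}"
  define Y where "Y w = {(P, Q) \<in> X. soulmates P Q m0 w}" for w
  have finX: "finite X"
  proof -
    have "X \<subseteq> (insert m0 M \<rightarrow>\<^sub>E R) \<times> (W \<rightarrow>\<^sub>E R)" by (auto simp: X_def)
    moreover have "finite ((insert m0 M \<rightarrow>\<^sub>E R) \<times> (W \<rightarrow>\<^sub>E R))"
      using insert by (simp add: finite_PiE finite_rankings R_def)
    ultimately show ?thesis by (rule finite_subset)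
  qed
  have X_eq: "X = (\<lambda>(r, P, Q). (P(m0 := r), Q)) ` (R \<times> good n M W)"
  proof (rule set_eqI, rule iffI)
    fix z assume z: "z \<in> X"
    obtain P Q where zPQ: "z = (P, Q)" by (cases z)
    let ?P = "P(m0 := undefined)"
    have "?P \<in> M \<rightarrow>\<^sub>E R" using z zPQ insert(2) by (auto simp: X_def intro: fun_upd_in_PiE)
    moreover have "P m0 \<in> R" using z zPQ by (auto simp: X_def)
    moreover have "\<not> (\<exists>m \<in> M. \<exists>w \<in> W. soulmates ?P Q m w)"
      using z zPQ insert(2) by (auto simp: X_def soulmates_def)
    ultimately have "(P m0, ?P, Q) \<in> R \<times> good n M W" using z zPQ by (auto simp: X_def good_def R_def)
    moreover have "z = (\<lambda>(r, P, Q). (P(m0 := r), Q)) (P m0, ?P, Q)" using zPQ by simp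
    ultimately show "z \<in> (\<lambda>(r, P, Q). (P(m0 := r), Q)) ` (R \<times> good n M W)" by blast
  next
    fix z assume "z \<in> (\<lambda>(r, P, Q). (P(m0 := r), Q)) ` (R \<times> good n M W)"
    then obtain r P Q where r: "r \<in> R" and PQ: "(P, Q) \<in> good n M W" and z: "z = (P(m0 := r), Q)"
      by auto
    have a1: "P(m0 := r) \<in> insert m0 M \<rightarrow>\<^sub>E R" by (rule PiE_fun_upd) (use r PQ in \<open>auto simp: good_def R_def\<close>)
    have a2: "\<not> (\<exists>m \<in> M. \<exists>w \<in> W. soulmates (P(m0 := r)) Q m w)"
      using PQ insert(2) by (auto simp: good_def soulmates_def)
    have a3: "Q \<in> W \<rightarrow>\<^sub>E R" using PQ by (simp add: good_def R_def)
    show "z \<in> X" unfolding z X_def using a1 a2 a3 by simp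
  qed
  have X_inj: "inj_on (\<lambda>(r, P, Q). (P(m0 := r), Q)) (R \<times> good n M W)"
  proof (rule inj_onI)
    fix u v assume u: "u \<in> R \<times> good n M W" and v: "v \<in> R \<times> good n M W"
      and e: "(\<lambda>(r, P, Q). (P(m0 := r), Q)) u = (\<lambda>(r, P, Q). (P(m0 := r), Q)) v"
    obtain r P Q where ur: "u = (r, P, Q)" by (cases u) auto
    obtain r' P' Q' where vr: "v = (r', P', Q')" by (cases v) auto
    have a: "(P, Q) \<in> good n M W" "(P', Q') \<in> good n M W" "P(m0 := r) = P'(m0 := r')" "Q = Q'"
      using u v e ur vr by auto
    have "P = P' \<and> r = r'" using upd_inj[of P M R P' m0 r r'] insert(2) a
      by (auto simp: good_def R_def)
    then show "u = v" using ur vr a by simp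
  qed
  have cardX: "card X = fact n * card (good n M W)"
    unfolding X_eq using X_inj
    by (simp add: card_image card_cartesian_product card_rankings R_def)
  have good_eq: "good n (insert m0 M) W = X - (\<Union>w\<in>W. Y w)"
    by (auto simp: good_def X_def Y_def R_def)
  have Ysub: "(\<Union>w\<in>W. Y w) \<subseteq> X" by (auto simp: Y_def)
  have card_good: "card (good n (insert m0 M) W) = card X - card (\<Union>w\<in>W. Y w)"
    unfolding good_eq using Ysub finX by (simp add: card_Diff_subset finite_subset)
  have cardle: "card (\<Union>w\<in>W. Y w) \<le> card X" using Ysub finX by (simp add: card_mono)
  have cardU: "card (\<Union>w\<in>W. Y w) = (\<Sum>w\<in>W. card (Y w))"
  proof (rule card_UN_disjoint)
    show "finite W" by fact
    have "Y w \<subseteq> X" for w by (auto simp: Y_def)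
    then show "\<forall>w\<in>W. finite (Y w)" using finX by (meson finite_subset)
    show "\<forall>w\<in>W. \<forall>w'\<in>W. w \<noteq> w' \<longrightarrow> Y w \<inter> Y w' = {}"
    proof (intro ballI impI)
      fix w w' assume ww: "w \<in> W" "w' \<in> W" "w \<noteq> w'"
      show "Y w \<inter> Y w' = {}"
      proof (rule equals0I)
        fix z assume "z \<in> Y w \<inter> Y w'"
        then obtain P Q where "(P, Q) \<in> X" "P m0 w = 1" "P m0 w' = 1"
          by (auto simp: Y_def soulmates_def)
        moreover have "P m0 \<in> rankings n" using \<open>(P, Q) \<in> X\<close> by (auto simp: X_def R_def)
        ultimately show False using rank_inj[of "P m0" n w w'] ww insert.prems(3) by auto
      qed
    qed
  qed
  have cardY: "card (Y w) = fact (n - 1) * fact (n - 1) * card (good n M (W - {w}))" if w: "w \<in> W" for w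
  proof -
    have wn: "w < n" using w insert.prems(3) by auto
    let ?f = "\<lambda>(r, q, P, Q). (P(m0 := r), Q(w := q))"
    let ?D = "{r \<in> R. r w = 1} \<times> {q \<in> R. q m0 = 1} \<times> good n M (W - {w})"
    have Y_eq: "Y w = ?f ` ?D"
    proof (rule set_eqI, rule iffI)
      fix z assume z: "z \<in> Y w"
      obtain P Q where zPQ: "z = (P, Q)" by (cases z)
      let ?P = "P(m0 := undefined)" and ?Q = "Q(w := undefined)"
      have PX: "P \<in> insert m0 M \<rightarrow>\<^sub>E R" "Q \<in> W \<rightarrow>\<^sub>E R" and ns: "\<not> (\<exists>m \<in> M. \<exists>w \<in> W. soulmates P Q m w)"
        and sw: "P m0 w = 1" "Q w m0 = 1"
        using z zPQ by (auto simp: Y_def X_def soulmates_def)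
      have "?P \<in> M \<rightarrow>\<^sub>E R" using PX insert(2) by (auto intro: fun_upd_in_PiE)
      moreover have "?Q \<in> (W - {w}) \<rightarrow>\<^sub>E R"
        using PX w fun_upd_in_PiE[of w "W - {w}" Q "\<lambda>_. R"] by (auto simp: insert_absorb)
      moreover have "\<not> (\<exists>m \<in> M. \<exists>w' \<in> W - {w}. soulmates ?P ?Q m w')"
        using ns insert(2) by (auto simp: soulmates_def)
      ultimately have "(?P, ?Q) \<in> good n M (W - {w})" by (auto simp: good_def R_def)
      moreover have "P m0 \<in> {r \<in> R. r w = 1}" "Q w \<in> {q \<in> R. q m0 = 1}" using PX sw w by auto
      ultimately have "(P m0, Q w, ?P, ?Q) \<in> ?D" by blast
      moreover have "z = ?f (P m0, Q w, ?P, ?Q)" using zPQ by simp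
      ultimately show "z \<in> ?f ` ?D" by blast
    next
      fix z assume "z \<in> ?f ` ?D"
      then obtain r q P Q where r: "r \<in> R" "r w = 1" and q: "q \<in> R" "q m0 = 1"
        and PQ: "(P, Q) \<in> good n M (W - {w})" and z: "z = (P(m0 := r), Q(w := q))"
        by auto
      have P1: "P(m0 := r) \<in> insert m0 M \<rightarrow>\<^sub>E R" by (rule PiE_fun_upd) (use r PQ in \<open>auto simp: good_def R_def\<close>)
      have "Q(w := q) \<in> insert w (W - {w}) \<rightarrow>\<^sub>E R" by (rule PiE_fun_upd) (use q PQ in \<open>auto simp: good_def R_def\<close>)
      then have Q1: "Q(w := q) \<in> W \<rightarrow>\<^sub>E R" using w by (simp add: insert_absorb)
      have ns: "\<not> (\<exists>m \<in> M. \<exists>w' \<in> W. soulmates (P(m0 := r)) (Q(w := q)) m w')"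
      proof
        assume "\<exists>m \<in> M. \<exists>w' \<in> W. soulmates (P(m0 := r)) (Q(w := q)) m w'"
        then obtain m w' where mw: "m \<in> M" "w' \<in> W" "soulmates (P(m0 := r)) (Q(w := q)) m w'" by blast
        have mm0: "m \<noteq> m0" using mw insert(2) by auto
        show False
        proof (cases "w' = w")
          case True
          then have "q m = 1" using mw by (simp add: soulmates_def)
          then show False using rank_inj[of q n m m0] q mm0 mw Msub m0 by (auto simp: R_def)
        next
          case False
          then have "soulmates P Q m w'" using mw mm0 by (simp add: soulmates_def)
          then show False using PQ mw False by (auto simp: good_def)
        qed
      qed
      have "soulmates (P(m0 := r)) (Q(w := q)) m0 w" using r q by (simp add: soulmates_def)
      then show "z \<in> Y w" using z P1 Q1 ns by (simp add: Y_def X_def)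
    qed
    have inj: "inj_on ?f ?D"
    proof (rule inj_onI)
      fix u v assume u: "u \<in> ?D" and v: "v \<in> ?D" and e: "?f u = ?f v"
      obtain r q P Q where ur: "u = (r, q, P, Q)" by (cases u) auto
      obtain r' q' P' Q' where vr: "v = (r', q', P', Q')" by (cases v) auto
      have a: "(P, Q) \<in> good n M (W - {w})" "(P', Q') \<in> good n M (W - {w})"
        "P(m0 := r) = P'(m0 := r')" "Q(w := q) = Q'(w := q')"
        using u v e ur vr by auto
      have "P = P' \<and> r = r'" using upd_inj[of P M R P' m0 r r'] insert(2) a by (auto simp: good_def R_def)
      moreover have "Q = Q' \<and> q = q'" using upd_inj[of Q "W - {w}" R Q' w q q'] a by (auto simp: good_def R_def)
      ultimately show "u = v" using ur vr by simp
    qed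
    have "card (Y w) = card ?D" unfolding Y_eq using inj by (rule card_image)
    also have "\<dots> = fact (n - 1) * fact (n - 1) * card (good n M (W - {w}))"
      using card_rank1[OF wn] card_rank1[OF m0] by (simp add: card_cartesian_product R_def)
    finally show ?thesis .
  qed
  have IHw: "int (card (good n M (W - {w}))) = G (int (fact n)) (int (fact (n - 1)) ^ 2) (card M) (card W - 1)"
    if "w \<in> W" for w
  proof -
    have "int (card (good n M (W - {w}))) = G (int (fact n)) (int (fact (n - 1)) ^ 2) (card M) (card (W - {w}))"
      by (rule insert.IH) (use Msub insert.prems in auto)
    moreover have "card (W - {w}) = card W - 1" using that insert.prems(2) by simp
    ultimately show ?thesis by simp
  qed
  have "int (card (\<Union>w\<in>W. Y w)) = (\<Sum>w\<in>W. int (card (Y w)))"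
    unfolding cardU by simp
  also have "\<dots> = (\<Sum>w\<in>W. int (fact (n - 1)) ^ 2 * G (int (fact n)) (int (fact (n - 1)) ^ 2) (card M) (card W - 1))"
  proof (rule sum.cong)
    fix w assume w: "w \<in> W"
    have "int (card (Y w)) = int (fact (n - 1)) ^ 2 * int (card (good n M (W - {w})))"
      by (simp add: cardY[OF w] power2_eq_square)
    then show "int (card (Y w)) = int (fact (n - 1)) ^ 2 * G (int (fact n)) (int (fact (n - 1)) ^ 2) (card M) (card W - 1)"
      by (simp only: IHw[OF w])
  qed simp
  also have "\<dots> = int (card W) * int (fact (n - 1)) ^ 2 * G (int (fact n)) (int (fact (n - 1)) ^ 2) (card M) (card W - 1)"
    by simp
  finally have U: "int (card (\<Union>w\<in>W. Y w)) = \<dots>" .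
  have "int (card (good n (insert m0 M) W)) = int (card X) - int (card (\<Union>w\<in>W. Y w))"
    using card_good cardle by simp
  also have "\<dots> = int (fact n) * G (int (fact n)) (int (fact (n - 1)) ^ 2) (card M) (card W)
      - int (card W) * int (fact (n - 1)) ^ 2 * G (int (fact n)) (int (fact (n - 1)) ^ 2) (card M) (card W - 1)"
  proof -
    have "int (card (good n M W)) = G (int (fact n)) (int (fact (n - 1)) ^ 2) (card M) (card W)"
      by (rule insert.IH) (use Msub insert.prems in auto)
    then show ?thesis unfolding U cardX by simp
  qed
  also have "\<dots> = G (int (fact n)) (int (fact (n - 1)) ^ 2) (card (insert m0 M)) (card W)"
    using insert(1,2) by (simp add: GSuc algebra_simps)
  finally show ?case .
qed

theorem mainTheorem2:
  fixes n k :: nat and GM GW :: "nat set"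
  assumes "k \<le> n"
    and "GM \<subseteq> {..<n}" and "card GM = k"
    and "GW \<subseteq> {..<n}" and "card GW = k"
  shows "int (S_count n GM GW) =
    (\<Sum>i = 0..n - k. (-1) ^ i * int ((n - k) choose i) ^ 2 * int (fact (n - 1)) ^ (2 * i)
        * int (fact i) * int (fact n) ^ (2 * n - 2 * k - 2 * i))"
proof -
  let ?m = "n - k"
  have fGM: "finite GM" and fGW: "finite GW" using assms finite_subset by auto
  have cM: "card ({..<n} - GM) = ?m" using assms fGM by (simp add: card_Diff_subset)
  have cW: "card ({..<n} - GW) = ?m" using assms fGW by (simp add: card_Diff_subset)
  have "S_count n GM GW = card (good n ({..<n} - GM) ({..<n} - GW))"
    by (simp add: S_count_def good_def)
  then have "int (S_count n GM GW) = G (int (fact n)) (int (fact (n - 1)) ^ 2) ?m ?m"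
    using main_count[of "{..<n} - GM" n "{..<n} - GW"] cM cW by auto
  also have "\<dots> = (\<Sum>i = 0..n - k. (-1) ^ i * int ((n - k) choose i) ^ 2 * int (fact (n - 1)) ^ (2 * i)
        * int (fact i) * int (fact n) ^ (2 * n - 2 * k - 2 * i))"
    unfolding G_def atLeast0AtMost
  proof (rule sum.cong)
    fix i assume "i \<in> {..?m}"
    then have e: "2 * n - 2 * k - 2 * i = (?m - i) + (?m - i)" by auto
    show "(-1) ^ i * int (?m choose i) * int (?m choose i) * int (fact i) * (int (fact (n - 1)) ^ 2) ^ i
        * int (fact n) ^ (?m - i) * int (fact n) ^ (?m - i) =
        (-1) ^ i * int (?m choose i) ^ 2 * int (fact (n - 1)) ^ (2 * i) * int (fact i) * int (fact n) ^ (2 * n - 2 * k - 2 * i)"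
      unfolding e power_add power_mult power2_eq_square by (simp add: mult_ac)
  qed simp
  finally show ?thesis .
qed
end
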